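(* Let $G$ be an outer-string graph with an outer-string representation $\varphi$, and let $\varphi(x_i)$ be an external string. Suppose a cop occupies $x_i$ and the robber occupies a vertex whose string does not intersect $\varphi(x_i)$ and lies to the right of $\varphi(x_i)$. If the cop stays on $x_i$, the robber cannot move to a string on the left of $\varphi(x_i)$ (without being captured).
   Context: An outer-string representation of $G$ assigns to each vertex a bounded curve (string) in the closed upper half-plane meeting the $x$-axis in exactly one point, an endpoint of the string, with distinct vertices adjacent iff their strings intersect. Order the vertices $v_1,\dots,v_n$ by the $x$-coordinate of the point where their string meets the $x$-axis; $v_i$ is on the left of $v_j$ (and $v_j$ on the right of $v_i$) if $i<j$. The strings partition the upper half-plane into regions, exactly one unbounded; a string is external if it has a point on the boundary of the unbounded region. Game of cops and robber: alternate moves, each piece stays or moves to an adjacent vertex; capture when a cop occupies the robber's vertex (a robber moving to a vertex of $N[x_i]$ while a cop is on $x_i$ is captured). *)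

theory Defs
  imports "HOL-Analysis.Analysis"
begin

definition upper_half :: "complex set" where
  "upper_half = {z. 0 \<le> Im z}"

definition is_graph :: "'v set \<Rightarrow> ('v \<Rightarrow> 'v \<Rightarrow> bool) \<Rightarrow> bool" where
  "is_graph V E \<longleftrightarrow> finite V \<and> (\<forall>u v. E u v \<longrightarrow> u \<in> V \<and> v \<in> V)
     \<and> (\<forall>u v. E u v \<longrightarrow> E v u) \<and> (\<forall>v. \<not> E v v)"

text \<open>Base point of a string: the endpoint where it meets the x-axis.\<close>
definition base :: "('v \<Rightarrow> real \<Rightarrow> complex) \<Rightarrow> 'v \<Rightarrow> complex" where
  "base \<phi> v = pathstart (\<phi> v)"

definition outer_string_rep ::
  "'v set \<Rightarrow> ('v \<Rightarrow> 'v \<Rightarrow> bool) \<Rightarrow> ('v \<Rightarrow> real \<Rightarrow> complex) \<Rightarrow> bool" where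
  "outer_string_rep V E \<phi> \<longleftrightarrow>
     (\<forall>v\<in>V. path (\<phi> v) \<and> path_image (\<phi> v) \<subseteq> upper_half
        \<and> path_image (\<phi> v) \<inter> {z. Im z = 0} = {pathstart (\<phi> v)})
     \<and> inj_on (\<lambda>v. Re (base \<phi> v)) V
     \<and> (\<forall>u\<in>V. \<forall>v\<in>V. u \<noteq> v \<longrightarrow> (E u v \<longleftrightarrow> path_image (\<phi> u) \<inter> path_image (\<phi> v) \<noteq> {}))"

definition left_of :: "('v \<Rightarrow> real \<Rightarrow> complex) \<Rightarrow> 'v \<Rightarrow> 'v \<Rightarrow> bool" where
  "left_of \<phi> u v \<longleftrightarrow> Re (base \<phi> u) < Re (base \<phi> v)"

definition regions :: "'v set \<Rightarrow> ('v \<Rightarrow> real \<Rightarrow> complex) \<Rightarrow> complex set set" where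
  "regions V \<phi> = components (upper_half - (\<Union>v\<in>V. path_image (\<phi> v)))"

definition external :: "'v set \<Rightarrow> ('v \<Rightarrow> real \<Rightarrow> complex) \<Rightarrow> 'v \<Rightarrow> bool" where
  "external V \<phi> x \<longleftrightarrow>
     (\<exists>C \<in> regions V \<phi>. \<not> bounded C \<and> path_image (\<phi> x) \<inter> frontier C \<noteq> {})"

definition closed_nbhd :: "('v \<Rightarrow> 'v \<Rightarrow> bool) \<Rightarrow> 'v \<Rightarrow> 'v set" where
  "closed_nbhd E x = insert x {y. E x y}"

end

theory Submission
  imports Defs "HOL-Complex_Analysis.Complex_Analysis"
begin

lemma wn_from_log:
  assumes p: "path p" and z: "z \<notin> path_image p" and cq: "continuous_on {0..1} q"
    and pq: "\<And>t. t\<in>{0..1} \<Longrightarrow> p t = z + exp (q t)"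
  shows "2 * of_real pi * \<i> * winding_number p z = q 1 - q 0"
proof -
  obtain q' where q': "path q'" "pathfinish q' - pathstart q' = 2 * of_real pi * \<i> * winding_number p z"
    "\<And>t. t\<in>{0..1} \<Longrightarrow> p t = z + exp (q' t)"
    using winding_number_as_continuous_log[OF p z] by blast
  have int: "\<exists>n::int. q t - q' t = of_int (2*n) * pi * \<i>" if "t \<in> {0..1}" for t
  proof -
    have "exp (q t) = exp (q' t)" using pq[OF that] q'(3)[OF that] by simp
    then obtain n::int where "q t = q' t + of_int (2*n) * pi * \<i>" using exp_eq by blast
    then show ?thesis by (intro exI[of _ n]) simp
  qed
  have "(\<lambda>t. q t - q' t) constant_on {0..1}"
  proof (rule continuous_discrete_range_constant)
    show "connected {0..1::real}" by simp
    show "continuous_on {0..1} (\<lambda>t. q t - q' t)"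
      using cq q'(1) by (intro continuous_intros) (auto simp: path_def)
    show "\<exists>e>0. \<forall>y. y \<in> {0..1} \<and> q y - q' y \<noteq> q x - q' x \<longrightarrow> e \<le> cmod (q y - q' y - (q x - q' x))"
      if x: "x \<in> {0..1::real}" for x
    proof (intro exI[of _ "2*pi"] conjI allI impI)
      show "0 < 2*pi" by simp
      fix y assume y: "y \<in> {0..1} \<and> q y - q' y \<noteq> q x - q' x"
      obtain n::int where n: "q x - q' x = of_int (2*n) * pi * \<i>" using int x by blast
      obtain m::int where m: "q y - q' y = of_int (2*m) * pi * \<i>" using int y by blast
      have "m \<noteq> n" using y n m by auto
      then have "1 \<le> \<bar>real_of_int (m - n)\<bar>" by linarith
      have "q y - q' y - (q x - q' x) = of_real (2 * pi * real_of_int (m - n)) * \<i>"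
        using n m by (simp add: algebra_simps)
      then have "cmod (q y - q' y - (q x - q' x)) = 2 * pi * \<bar>real_of_int (m - n)\<bar>"
        by (simp add: norm_mult abs_mult norm_of_int flip: of_int_diff)
      also have "\<dots> \<ge> 2*pi" using \<open>1 \<le> _\<close> by simp
      finally show "2*pi \<le> cmod (q y - q' y - (q x - q' x))" .
    qed
  qed
  then have "q 1 - q' 1 = q 0 - q' 0" by (auto simp: constant_on_def)
  then show ?thesis using q'(2) by (simp add: pathstart_def pathfinish_def algebra_simps)
qed

lemma exp_ii_half: "exp (\<i> * of_real pi / 2) = \<i>"
proof -
  have "\<i> * of_real pi / 2 = \<i> * of_real (pi/2)" by simp
  then have "exp (\<i> * of_real pi / 2) = cis (pi/2)" by (simp add: cis_conv_exp)
  also have "\<dots> = \<i>" by (simp add: complex_eq_iff)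
  finally show ?thesis .
qed

lemma wn_upper:
  assumes p: "path p" and h: "\<And>t. t\<in>{0..1} \<Longrightarrow> Im z \<le> Im (p t) \<and> p t \<noteq> z"
  shows "2 * of_real pi * \<i> * winding_number p z = Ln (-\<i> * (p 1 - z)) - Ln (-\<i> * (p 0 - z))"
proof -
  have nz: "z \<notin> path_image p"
  proof
    assume "z \<in> path_image p"
    then obtain t where "t\<in>{0..1}" "z = p t" by (auto simp: path_image_def)
    with h show False by blast
  qed
  have np: "-\<i> * (p t - z) \<notin> \<real>\<^sub>\<le>\<^sub>0" if "t \<in> {0..1}" for t
    using h[OF that] by (auto simp: complex_nonpos_Reals_iff complex_eq_iff)
  have "2 * of_real pi * \<i> * winding_number p z = (Ln (-\<i> * (p 1 - z)) + \<i> * of_real pi / 2) - (Ln (-\<i> * (p 0 - z)) + \<i> * of_real pi / 2)"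
  proof (rule wn_from_log[OF p nz])
    show "continuous_on {0..1} (\<lambda>t. Ln (-\<i> * (p t - z)) + \<i> * of_real pi / 2)"
      using p np by (intro continuous_intros) (auto simp: path_def)
    fix t :: real assume t: "t \<in> {0..1}"
    have ne: "-\<i> * (p t - z) \<noteq> 0" using h[OF t] by auto
    have "exp (Ln (-\<i> * (p t - z)) + \<i> * of_real pi / 2) = (-\<i> * (p t - z)) * \<i>"
      using ne by (simp add: exp_add exp_ii_half)
    then show "p t = z + exp (Ln (-\<i> * (p t - z)) + \<i> * of_real pi / 2)" by (simp add: algebra_simps)
  qed
  then show ?thesis by simp
qed

lemma wn_lower:
  assumes p: "path p" and h: "\<And>t. t\<in>{0..1} \<Longrightarrow> Im (p t) \<le> Im z \<and> p t \<noteq> z"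
  shows "2 * of_real pi * \<i> * winding_number p z = Ln (\<i> * (p 1 - z)) - Ln (\<i> * (p 0 - z))"
proof -
  have nz: "z \<notin> path_image p"
  proof
    assume "z \<in> path_image p"
    then obtain t where "t\<in>{0..1}" "z = p t" by (auto simp: path_image_def)
    with h show False by blast
  qed
  have np: "\<i> * (p t - z) \<notin> \<real>\<^sub>\<le>\<^sub>0" if "t \<in> {0..1}" for t
    using h[OF that] by (auto simp: complex_nonpos_Reals_iff complex_eq_iff)
  have "2 * of_real pi * \<i> * winding_number p z = (Ln (\<i> * (p 1 - z)) - \<i> * of_real pi / 2) - (Ln (\<i> * (p 0 - z)) - \<i> * of_real pi / 2)"
  proof (rule wn_from_log[OF p nz])
    show "continuous_on {0..1} (\<lambda>t. Ln (\<i> * (p t - z)) - \<i> * of_real pi / 2)"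
      using p np by (intro continuous_intros) (auto simp: path_def)
    fix t :: real assume t: "t \<in> {0..1}"
    have ne: "\<i> * (p t - z) \<noteq> 0" using h[OF t] by auto
    have "exp (Ln (\<i> * (p t - z)) - \<i> * of_real pi / 2) = (\<i> * (p t - z)) / \<i>"
      using ne by (simp add: exp_diff exp_ii_half)
    then show "p t = z + exp (Ln (\<i> * (p t - z)) - \<i> * of_real pi / 2)" by (simp add: algebra_simps)
  qed
  then show ?thesis by simp
qed


lemma Ln_pos_ii: "0 < a \<Longrightarrow> Ln (of_real a * \<i>) = of_real (ln a) + \<i> * of_real pi / 2"
  using Ln_times_of_real[of a "\<i>"] by (simp add: Ln_of_real)

lemma Ln_pos_mii: "0 < a \<Longrightarrow> Ln (of_real a * (-\<i>)) = of_real (ln a) - \<i> * of_real pi / 2"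
  using Ln_times_of_real[of a "-\<i>"] by (simp add: Ln_of_real del: mult_minus_right)

theorem lemma4:
  fixes V :: "'v set" and E :: "'v \<Rightarrow> 'v \<Rightarrow> bool" and \<phi> :: "'v \<Rightarrow> real \<Rightarrow> complex"
    and x r :: 'v
  assumes "is_graph V E"
    and "outer_string_rep V E \<phi>"
    and "x \<in> V" and "external V \<phi> x"
    and "r \<in> V"
    and "path_image (\<phi> r) \<inter> path_image (\<phi> x) = {}"
    and "left_of \<phi> x r"
  shows "\<forall>w\<in>V. E r w \<and> left_of \<phi> w x \<longrightarrow> w \<in> closed_nbhd E x"
proof (intro ballI impI)
  fix w assume wV: "w \<in> V" and hw: "E r w \<and> left_of \<phi> w x"
  show "w \<in> closed_nbhd E x"
  proof (rule ccontr)
    assume nn: "w \<notin> closed_nbhd E x"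
    have strV: "\<And>v. v\<in>V \<Longrightarrow> path (\<phi> v) \<and> path_image (\<phi> v) \<subseteq> upper_half
        \<and> path_image (\<phi> v) \<inter> {z. Im z = 0} = {pathstart (\<phi> v)}"
      using assms(2) by (simp add: outer_string_rep_def)
    have adj: "\<And>u v. u\<in>V \<Longrightarrow> v\<in>V \<Longrightarrow> u \<noteq> v \<Longrightarrow> (E u v \<longleftrightarrow> path_image (\<phi> u) \<inter> path_image (\<phi> v) \<noteq> {})"
      using assms(2) by (simp add: outer_string_rep_def)
    have bin: "\<And>v. v\<in>V \<Longrightarrow> base \<phi> v \<in> path_image (\<phi> v)"
      by (simp add: base_def pathstart_in_path_image)
    have bIm: "\<And>v. v\<in>V \<Longrightarrow> Im (base \<phi> v) = 0"
      using strV by (force simp: base_def)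
    have bre: "\<And>v. v\<in>V \<Longrightarrow> base \<phi> v = of_real (Re (base \<phi> v))"
      using bIm by (simp add: complex_eq_iff)
    have upIm: "\<And>v z. v\<in>V \<Longrightarrow> z \<in> path_image (\<phi> v) \<Longrightarrow> 0 \<le> Im z"
      using strV by (force simp: upper_half_def)
    define xw where "xw = Re (base \<phi> w)"
    define xx where "xx = Re (base \<phi> x)"
    define xr where "xr = Re (base \<phi> r)"
    have ord: "xw < xx" "xx < xr" using hw assms(7) by (auto simp: left_of_def xw_def xx_def xr_def)
    have wx: "w \<noteq> x" using ord by (auto simp: xw_def xx_def)
    have nE: "\<not> E x w" using nn by (simp add: closed_nbhd_def)
    have dxw: "path_image (\<phi> x) \<inter> path_image (\<phi> w) = {}"
      using adj[OF assms(3) wV] wx nE by auto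
    have rw: "r \<noteq> w" using hw assms(1) by (auto simp: is_graph_def)
    obtain pp where pp: "pp \<in> path_image (\<phi> w)" "pp \<in> path_image (\<phi> r)"
      using adj[OF assms(5) wV rw] hw by auto
    obtain s where s: "s \<in> {0..1}" "\<phi> w s = pp" using pp(1) by (auto simp: path_image_def)
    obtain t where t: "t \<in> {0..1}" "\<phi> r t = pp" using pp(2) by (auto simp: path_image_def)
    define P where "P = subpath 0 s (\<phi> w) +++ reversepath (subpath 0 t (\<phi> r))"
    have pw: "path (\<phi> w)" and pr: "path (\<phi> r)" using strV wV assms(5) by auto
    have Ppath: "path P" unfolding P_def using pw pr s t by (simp add: path_join)
    have Pimg: "path_image P \<subseteq> path_image (\<phi> w) \<union> path_image (\<phi> r)"
    proof -
      have "path_image (subpath 0 s (\<phi> w)) \<subseteq> path_image (\<phi> w)"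
        using s by (intro path_image_subpath_subset) auto
      moreover have "path_image (subpath 0 t (\<phi> r)) \<subseteq> path_image (\<phi> r)"
        using t by (intro path_image_subpath_subset) auto
      ultimately show ?thesis unfolding P_def
        using path_image_join_subset[of "subpath 0 s (\<phi> w)" "reversepath (subpath 0 t (\<phi> r))"]
        by (auto simp: path_image_reversepath)
    qed
    have Pse: "pathstart P = base \<phi> w" "pathfinish P = base \<phi> r"
      unfolding P_def using s t by (auto simp: base_def pathstart_def pathfinish_def subpath_def reversepath_def joinpaths_def)
    define L where "L = (\<lambda>u::real. of_real ((xr+xw)/2) + of_real ((xr-xw)/2) * cis (-(pi*u)))"
    have Lpath: "path L" unfolding L_def path_def by (intro continuous_intros)
    have L0: "L 0 = base \<phi> r" using bre[OF assms(5)] by (simp add: L_def xr_def complex_eq_iff field_simps)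
    have L1: "L 1 = base \<phi> w" using bre[OF wV] by (simp add: L_def xw_def complex_eq_iff field_simps)
    have LIm: "Im (L u) \<le> 0" if "u \<in> {0..1}" for u
    proof -
      have "0 \<le> sin (pi*u)" using that by (intro sin_ge_zero) auto
      then show ?thesis using ord by (simp add: L_def)
    qed
    have LIm0: "L u = base \<phi> r \<or> L u = base \<phi> w" if "u \<in> {0..1}" "0 \<le> Im (L u)" for u
    proof (cases "u = 0 \<or> u = 1")
      case True then show ?thesis using L0 L1 by auto
    next
      case False
      then have "0 < sin (pi*u)" using that(1) by (intro sin_gt_zero) auto
      then have "Im (L u) < 0" using ord by (simp add: L_def)
      then show ?thesis using that by simp
    qed
    have bxx: "base \<phi> x \<in> path_image (\<phi> x)" using bin assms(3) .
    have bx_ne: "base \<phi> x \<noteq> base \<phi> r" "base \<phi> x \<noteq> base \<phi> w"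
      using ord by (auto simp: xw_def xx_def xr_def)
    have Pu: "0 \<le> Im (P u) \<and> P u \<noteq> base \<phi> x" if "u \<in> {0..1}" for u
    proof -
      have "P u \<in> path_image P" using that by (simp add: path_image_def)
      then have "P u \<in> path_image (\<phi> w) \<union> path_image (\<phi> r)" using Pimg by auto
      then show ?thesis using upIm[OF wV] upIm[OF assms(5)] bxx dxw assms(6) by auto
    qed
    have Lu: "Im (L u) \<le> 0 \<and> L u \<noteq> base \<phi> x" if "u \<in> {0..1}" for u
      using LIm[OF that] LIm0[OF that] bx_ne bIm[OF assms(3)] by force
    have wP: "2 * of_real pi * \<i> * winding_number P (base \<phi> x)
        = Ln (-\<i> * (P 1 - base \<phi> x)) - Ln (-\<i> * (P 0 - base \<phi> x))"
      using wn_upper[OF Ppath, of "base \<phi> x"] Pu bIm[OF assms(3)] by simp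
    have wL: "2 * of_real pi * \<i> * winding_number L (base \<phi> x)
        = Ln (\<i> * (L 1 - base \<phi> x)) - Ln (\<i> * (L 0 - base \<phi> x))"
      using wn_lower[OF Lpath, of "base \<phi> x"] Lu bIm[OF assms(3)] by simp
    have P1: "P 1 = base \<phi> r" and P0: "P 0 = base \<phi> w" using Pse by (simp_all add: pathstart_def pathfinish_def)
    define a where "a = xr - xx"
    define c where "c = xx - xw"
    have a0: "0 < a" and c0: "0 < c" using ord by (auto simp: a_def c_def)
    have e1: "-\<i> * (base \<phi> r - base \<phi> x) = of_real a * (-\<i>)"
      using bre[OF assms(5)] bre[OF assms(3)] by (simp add: a_def xr_def xx_def complex_eq_iff)
    have e2: "-\<i> * (base \<phi> w - base \<phi> x) = of_real c * \<i>"
      using bre[OF wV] bre[OF assms(3)] by (simp add: c_def xw_def xx_def complex_eq_iff)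
    have e3: "\<i> * (base \<phi> w - base \<phi> x) = of_real c * (-\<i>)"
      using bre[OF wV] bre[OF assms(3)] by (simp add: c_def xw_def xx_def complex_eq_iff)
    have e4: "\<i> * (base \<phi> r - base \<phi> x) = of_real a * \<i>"
      using bre[OF assms(5)] bre[OF assms(3)] by (simp add: a_def xr_def xx_def complex_eq_iff)
    define \<gamma> where "\<gamma> = P +++ L"
    have nP: "base \<phi> x \<notin> path_image P" using Pu unfolding path_image_def by (metis imageE)
    have nL: "base \<phi> x \<notin> path_image L" using Lu unfolding path_image_def by (metis imageE)
    have gpath: "path \<gamma>" unfolding \<gamma>_def using Ppath Lpath Pse L0 by (simp add: pathstart_def)
    have gloop: "pathfinish \<gamma> = pathstart \<gamma>" unfolding \<gamma>_def using Pse L1 by (simp add: pathfinish_join)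
      (simp add: pathfinish_def)
    have "2 * of_real pi * \<i> * winding_number \<gamma> (base \<phi> x)
          = 2 * of_real pi * \<i> * winding_number P (base \<phi> x) + 2 * of_real pi * \<i> * winding_number L (base \<phi> x)"
      unfolding \<gamma>_def using winding_number_join[OF Ppath nP Lpath nL] Pse L0
      by (simp add: pathstart_def distrib_left)
    also have "\<dots> = 2 * of_real pi * \<i> * (-1)"
      unfolding wP wL P1 P0 L1 L0 e1 e2 e3 e4 Ln_pos_ii[OF a0] Ln_pos_ii[OF c0] Ln_pos_mii[OF a0] Ln_pos_mii[OF c0]
      by (simp add: algebra_simps)
    finally have "(2 * of_real pi * \<i>) * winding_number \<gamma> (base \<phi> x) = (2 * of_real pi * \<i>) * (-1)" .
    then have wnx: "winding_number \<gamma> (base \<phi> x) = -1"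
      by (subst (asm) mult_left_cancel) (auto simp: pi_neq_zero)
    have Limg: "z = base \<phi> r \<or> z = base \<phi> w" if zL: "z \<in> path_image L" and zI: "0 \<le> Im z" for z
    proof -
      obtain u where "u \<in> {0..1}" "z = L u" using zL unfolding path_image_def by blast
      then show ?thesis using LIm0 zI by blast
    qed
    have gimg: "path_image \<gamma> \<subseteq> path_image P \<union> path_image L"
      unfolding \<gamma>_def by (rule path_image_join_subset)
    have dx: "path_image (\<phi> x) \<inter> path_image \<gamma> = {}"
    proof -
      { fix z assume z: "z \<in> path_image (\<phi> x)" "z \<in> path_image \<gamma>"
        have False
        proof (cases "z \<in> path_image P")
          case True then show False using Pimg z dxw assms(6) by auto
        next
          case False
          then have "z \<in> path_image L" using z gimg by auto
          then have "z = base \<phi> r \<or> z = base \<phi> w" using Limg upIm[OF assms(3) z(1)] by auto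
          then show False using z(1) bin[OF wV] bin[OF assms(5)] dxw assms(6) by auto
        qed }
      then show ?thesis by auto
    qed
    have wconst: "winding_number \<gamma> y = -1" if "y \<in> path_image (\<phi> x)" for y
    proof -
      have "winding_number \<gamma> constant_on path_image (\<phi> x)"
        using winding_number_constant[OF gpath gloop connected_path_image dx] strV assms(3) by auto
      then show ?thesis using that bxx wnx by (auto simp: constant_on_def)
    qed
    obtain C where C: "C \<in> regions V \<phi>" "\<not> bounded C" "path_image (\<phi> x) \<inter> frontier C \<noteq> {}"
      using assms(4) by (auto simp: external_def)
    have Csub: "C \<subseteq> upper_half - (\<Union>v\<in>V. path_image (\<phi> v))" and Ccon: "connected C"
      using C(1) by (auto simp: regions_def dest: in_components_subset in_components_connected)
    have dC: "C \<inter> path_image \<gamma> = {}"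
    proof -
      { fix z assume z: "z \<in> C" "z \<in> path_image \<gamma>"
        have zn: "z \<notin> path_image (\<phi> w)" "z \<notin> path_image (\<phi> r)" using z(1) Csub wV assms(5) by auto
        have zu: "0 \<le> Im z" using z(1) Csub by (auto simp: upper_half_def)
        have False
        proof (cases "z \<in> path_image P")
          case True then show False using Pimg zn by auto
        next
          case False
          then have "z \<in> path_image L" using z gimg by auto
          then have "z = base \<phi> r \<or> z = base \<phi> w" using Limg zu by auto
          then show False using zn bin[OF wV] bin[OF assms(5)] by auto
        qed }
      then show ?thesis by auto
    qed
    obtain B where B: "\<forall>z\<in>path_image \<gamma>. norm z \<le> B"
      using bounded_path_image[OF gpath] by (auto simp: bounded_iff)
    obtain cc where cc: "cc \<in> C" "\<not> norm cc \<le> B" using C(2) by (auto simp: bounded_iff)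
    have wc: "winding_number \<gamma> cc = 0"
      by (rule winding_number_zero_outside[OF gpath convex_cball gloop, of cc 0 B])
         (use cc B in auto)
    obtain y where y: "y \<in> path_image (\<phi> x)" "y \<in> frontier C" using C(3) by auto
    have ycl: "y \<in> closure C" using y(2) by (simp add: frontier_def)
    have Tcon: "connected (insert y C)"
      by (rule connected_intermediate_closure[OF Ccon]) (use ycl closure_subset in auto)
    have Tdis: "insert y C \<inter> path_image \<gamma> = {}" using dC dx y(1) by auto
    have "winding_number \<gamma> constant_on insert y C"
      by (rule winding_number_constant[OF gpath gloop Tcon Tdis])
    then have "winding_number \<gamma> y = winding_number \<gamma> cc" using cc(1) by (auto simp: constant_on_def)
    then show False using wc wconst[OF y(1)] by simp
  qed
qed

end
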